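(* Let $n\ge 2$, $n\ge d\ge 1$, let $\{\tilde V(\theta):\theta\in\Theta\}$ be an ORP of $O(d+1)$ to $e_{d+1}$ and $\{\tilde V_d(\phi):\phi\in\Phi\}$ an ORP of $O(d)$ to $e_d$, with $V^{(k)}$ defined below. Let $\gamma\in\mathbb{R}$ with $|\gamma|\le 1$, $\theta_1,\dots,\theta_{n-1}\in\Theta$, $\theta_n\in\Phi$. Define the $(d-1)\times n$ matrix $\hat C$ and the $n\times n$ matrix $A$ by $$\begin{pmatrix}\hat C\\ A\end{pmatrix}=V^{(1)}(\theta_1)\cdots V^{(n-1)}(\theta_{n-1})V^{(n)}(\theta_n)\begin{pmatrix}0_{d-1,n}\\ P(\gamma)\end{pmatrix},$$ where $P(\gamma)$ is the $n\times n$ matrix with $P_{2,1}=\gamma$, $P_{k+1,k}=1$ for $2\le k<n$, $P_{1,n}=1$ and all other entries $0$, and let $C$ be the $d\times n$ matrix with first row $C_{1,j}=\sqrt{1-\gamma^2}\,\delta_{1,j}$ and rows $2,\dots,d$ equal to $\hat C$. Then $(A,C)$ is a HOON pair.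
   Context: ${}^*$ denotes transpose. $(A,C)$ is HOON if $A$ is upper Hessenberg ($A_{i,j}=0$ for $i>j+1$), $C_{1,j}=0$ for $j>1$, and $A^*A=\mathbb{I}_n-C^*C$. An orthogonal reduction parameterization (ORP) of $O(m)$ to $e_k$ is a family $\{\tilde Q(\theta):\theta\in\Theta\}$, $\Theta\subset\mathbb{R}^{m-1}$, of real orthogonal $m\times m$ matrices such that for every nonzero $h\in\mathbb{R}^m$ there is a unique $\theta(h)$ with $\tilde Q(\theta)^*h=\|h\|e_k$. For $\theta\in\Theta$ write $\tilde V(\theta)=\begin{pmatrix}\tilde O&x\\ y^*&\mu\end{pmatrix}$ ($\tilde O\in\mathbb{R}^{d\times d}$, $x,y\in\mathbb{R}^d$, $\mu\in\mathbb{R}$) and for $1\le k<n$ set $V^{(k)}(\theta)=\begin{pmatrix}\tilde O&0_{d,k-1}&x\\ 0_{k-1,d}&\mathbb{I}_{k-1}&0_{k-1,1}\\ y^*&0_{1,k-1}&\mu\end{pmatrix}\oplus\mathbb{I}_{n-k-1}$, an $(n+d-1)\times(n+d-1)$ matrix; set $V^{(n)}(\phi)=\tilde V_d(\phi)\oplus\mathbb{I}_{n-1}$. *)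

theory Defs
  imports "Jordan_Normal_Form.Matrix"
begin

(* All matrix/vector indices in JNF are 0-based; paper indices are 1-based. *)

definition real_orthogonal :: "nat \<Rightarrow> real mat \<Rightarrow> bool" where
  "real_orthogonal m Q \<longleftrightarrow> Q \<in> carrier_mat m m \<and> transpose_mat Q * Q = 1\<^sub>m m"

definition vnorm :: "real vec \<Rightarrow> real" where
  "vnorm h = sqrt (h \<bullet> h)"

(* Orthogonal reduction parameterization of O(m) to e_k (k is 1-based),
   parameter set Theta \<subseteq> R^(m-1), family Q. *)
definition ORP :: "nat \<Rightarrow> nat \<Rightarrow> real vec set \<Rightarrow> (real vec \<Rightarrow> real mat) \<Rightarrow> bool" where
  "ORP m k Theta Q \<longleftrightarrow>
     Theta \<subseteq> carrier_vec (m - 1) \<and>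
     (\<forall>\<theta>\<in>Theta. real_orthogonal m (Q \<theta>)) \<and>
     (\<forall>h\<in>carrier_vec m. h \<noteq> 0\<^sub>v m \<longrightarrow>
        (\<exists>!\<theta>. \<theta> \<in> Theta \<and> transpose_mat (Q \<theta>) *\<^sub>v h = vnorm h \<cdot>\<^sub>v unit_vec m (k - 1)))"

definition HOON :: "real mat \<Rightarrow> real mat \<Rightarrow> bool" where
  "HOON A C \<longleftrightarrow>
     (let n = dim_col A in
       A \<in> carrier_mat n n \<and> dim_col C = n \<and>
       (\<forall>i<n. \<forall>j<n. i > j + 1 \<longrightarrow> A $$ (i, j) = 0) \<and>
       (\<forall>j<n. j > 0 \<longrightarrow> C $$ (0, j) = 0) \<and>
       transpose_mat A * A = 1\<^sub>m n - transpose_mat C * C)"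

(* V^(k)(theta) for 1 \<le> k < n, built from Vt = [[O, x],[y^*, mu]] of size (d+1)x(d+1):
   [[O, 0, x],[0, I_{k-1}, 0],[y^*, 0, mu]] \<oplus> I_{n-k-1}, of size (n+d-1)x(n+d-1).
   0-based: block rows/cols 0..d-1 carry O, row/col d+k-1 carries y^*, x, mu. *)
definition Vk :: "nat \<Rightarrow> nat \<Rightarrow> nat \<Rightarrow> real mat \<Rightarrow> real mat" where
  "Vk n d k M = mat (n + d - 1) (n + d - 1) (\<lambda>(i, j).
     if i < d \<and> j < d then M $$ (i, j)
     else if i < d \<and> j = d + k - 1 then M $$ (i, d)
     else if i = d + k - 1 \<and> j < d then M $$ (d, j)
     else if i = d + k - 1 \<and> j = d + k - 1 then M $$ (d, d)
     else if i = j then 1 else 0)"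

definition Vn :: "nat \<Rightarrow> nat \<Rightarrow> real mat \<Rightarrow> real mat" where
  "Vn n d M = mat (n + d - 1) (n + d - 1) (\<lambda>(i, j).
     if i < d \<and> j < d then M $$ (i, j) else if i = j then 1 else 0)"

definition Pmat :: "nat \<Rightarrow> real \<Rightarrow> real mat" where
  "Pmat n \<gamma> = mat n n (\<lambda>(i, j).
     if i = 1 \<and> j = 0 then \<gamma>
     else if 2 \<le> i \<and> i < n \<and> j = i - 1 then 1
     else if i = 0 \<and> j = n - 1 then 1
     else 0)"

definition Vprod :: "nat \<Rightarrow> nat \<Rightarrow> (real vec \<Rightarrow> real mat) \<Rightarrow> (real vec \<Rightarrow> real mat)
                      \<Rightarrow> (nat \<Rightarrow> real vec) \<Rightarrow> real mat" where
  "Vprod n d Vt Vd \<theta> = foldr (\<lambda>k M. Vk n d k (Vt (\<theta> k)) * M) [1..<n] (Vn n d (Vd (\<theta> n)))"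

end

theory Submission
  imports Defs
begin

lemma emb_orth:
  fixes M :: "real mat"
  assumes M: "real_orthogonal m M" and I: "I \<subseteq> {..<N}" and bij: "bij_betw \<tau> I {..<m}"
  defines "E \<equiv> mat N N (\<lambda>(i,j). if i\<in>I \<and> j\<in>I then M$$(\<tau> i, \<tau> j) else if i=j then 1 else 0)"
  shows "transpose_mat E * E = 1\<^sub>m N"
proof (rule eq_matI)
  have Mc: "M \<in> carrier_mat m m" and MM: "transpose_mat M * M = 1\<^sub>m m" using M unfolding real_orthogonal_def by auto
  have Ment: "(\<Sum>k<m. M$$(k,a) * M$$(k,b)) = (if a = b then 1 else 0)" if "a<m" "b<m" for a b
  proof -
    have "(transpose_mat M * M) $$ (a,b) = 1\<^sub>m m $$ (a,b)" using MM by simp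
    then show ?thesis using Mc that by (simp add: scalar_prod_def lessThan_atLeast0)
  qed
  define e where "e = (\<lambda>l i. if l\<in>I \<and> i\<in>I then M$$(\<tau> l, \<tau> i) else if l=i then (1::real) else 0)"
  fix i j assume i: "i < dim_row (1\<^sub>m N)" and j: "j < dim_col (1\<^sub>m N)"
  hence i: "i<N" and j: "j<N" by auto
  have "(transpose_mat E * E) $$ (i,j) = (\<Sum>l\<in>{0..<N}. e l i * e l j)"
    using i j unfolding E_def e_def by (simp add: scalar_prod_def)
  also have "\<dots> = (\<Sum>l\<in>{0..<N} - I. e l i * e l j) + (\<Sum>l\<in>I. e l i * e l j)"
    by (rule sum.subset_diff, use I in auto)
  also have "\<dots> = 1\<^sub>m N $$ (i,j)"
  proof -
    have inj: "inj_on \<tau> I" using bij bij_betw_def by auto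
    have tl: "\<tau> l < m" if "l \<in> I" for l using bij that bij_betwE by blast
    consider "i\<in>I" "j\<in>I" | "i\<in>I" "j\<notin>I" | "i\<notin>I" "j\<in>I" | "i\<notin>I" "j\<notin>I" by blast
    then show ?thesis
    proof cases
      case 1
      have a: "(\<Sum>l\<in>{0..<N} - I. e l i * e l j) = 0"
        by (rule sum.neutral, use 1 in \<open>auto simp: e_def\<close>)
      have "(\<Sum>l\<in>I. e l i * e l j) = (\<Sum>l\<in>I. M$$(\<tau> l, \<tau> i) * M$$(\<tau> l, \<tau> j))"
        using 1 by (simp add: e_def)
      also have "\<dots> = (\<Sum>k<m. M$$(k,\<tau> i) * M$$(k,\<tau> j))"
        by (rule sum.reindex_bij_betw[OF bij, where g = "\<lambda>k. M$$(k,\<tau> i) * M$$(k,\<tau> j)"])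
      also have "\<dots> = (if i = j then 1 else 0)" using Ment[OF tl[OF 1(1)] tl[OF 1(2)]] inj 1
        by (auto simp: inj_on_def)
      finally show ?thesis using a i j by simp
    next
      case 2
      have a: "(\<Sum>l\<in>{0..<N} - I. e l i * e l j) = 0"
        by (rule sum.neutral, use 2 in \<open>auto simp: e_def\<close>)
      have b: "(\<Sum>l\<in>I. e l i * e l j) = 0"
        by (rule sum.neutral, use 2 in \<open>auto simp: e_def\<close>)
      show ?thesis using a b i j 2 by auto
    next
      case 3
      have a: "(\<Sum>l\<in>{0..<N} - I. e l i * e l j) = 0"
        by (rule sum.neutral, use 3 in \<open>auto simp: e_def\<close>)
      have b: "(\<Sum>l\<in>I. e l i * e l j) = 0"
        by (rule sum.neutral, use 3 in \<open>auto simp: e_def\<close>)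
      show ?thesis using a b i j 3 by auto
    next
      case 4
      have b: "(\<Sum>l\<in>I. e l i * e l j) = 0"
        by (rule sum.neutral, use 4 in \<open>auto simp: e_def\<close>)
      have "(\<Sum>l\<in>{0..<N} - I. e l i * e l j) = (\<Sum>l\<in>{0..<N} - I. if l = i then (if i = j then 1 else 0) else 0)"
        by (rule sum.cong, use 4 in \<open>auto simp: e_def\<close>)
      also have "\<dots> = (if i = j then 1 else 0)" using i 4 by (simp add: sum.delta)
      finally show ?thesis using b i j by simp
    qed
  qed
  finally show "(transpose_mat E * E) $$ (i,j) = 1\<^sub>m N $$ (i,j)" .
qed (auto simp: E_def)


lemma orth_mult:
  assumes "real_orthogonal N A" "real_orthogonal N B"
  shows "real_orthogonal N (A * B)"
proof -
  have A: "A \<in> carrier_mat N N" "transpose_mat A * A = 1\<^sub>m N"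
   and B: "B \<in> carrier_mat N N" "transpose_mat B * B = 1\<^sub>m N"
    using assms unfolding real_orthogonal_def by auto
  have At: "transpose_mat A \<in> carrier_mat N N" and Bt: "transpose_mat B \<in> carrier_mat N N" using A B by auto
  have "transpose_mat (A * B) * (A * B) = (transpose_mat B * transpose_mat A) * (A * B)"
    by (simp add: transpose_mult[OF A(1) B(1)])
  also have "\<dots> = transpose_mat B * (transpose_mat A * (A * B))"
    by (rule assoc_mult_mat[OF Bt At], use A B in auto)
  also have "transpose_mat A * (A * B) = (transpose_mat A * A) * B"
    by (rule assoc_mult_mat[symmetric, OF At A(1) B(1)])
  also have "\<dots> = B" using A B by simp
  also have "transpose_mat B * B = 1\<^sub>m N" by (rule B(2))
  finally show ?thesis using A B unfolding real_orthogonal_def by auto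
qed

lemma Vk_orth:
  assumes M: "real_orthogonal (d+1) M" and k: "1 \<le> k" "k < n"
  shows "real_orthogonal (n+d-1) (Vk n d k M)"
proof -
  define I where "I = {..<d} \<union> {d+k-1}"
  define \<tau> where "\<tau> = (\<lambda>i::nat. if i < d then i else d)"
  have I: "I \<subseteq> {..<n+d-1}" using k unfolding I_def by auto
  have bij: "bij_betw \<tau> I {..<d+1}"
    unfolding bij_betw_def inj_on_def I_def \<tau>_def using k
    by (auto simp: image_def)
  have eq: "Vk n d k M = mat (n+d-1) (n+d-1) (\<lambda>(i,j). if i\<in>I \<and> j\<in>I then M$$(\<tau> i, \<tau> j) else if i=j then 1 else 0)"
    unfolding Vk_def I_def \<tau>_def using k by (intro eq_matI) auto
  show ?thesis unfolding real_orthogonal_def eq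
    using emb_orth[OF M I bij] by auto
qed

lemma Vn_orth:
  assumes M: "real_orthogonal d M" and n: "1 \<le> n"
  shows "real_orthogonal (n+d-1) (Vn n d M)"
proof -
  define I where "I = {..<d}"
  have I: "I \<subseteq> {..<n+d-1}" using n unfolding I_def by auto
  have bij: "bij_betw id I {..<d}" unfolding I_def by auto
  have eq: "Vn n d M = mat (n+d-1) (n+d-1) (\<lambda>(i,j). if i\<in>I \<and> j\<in>I then M$$(id i, id j) else if i=j then 1 else 0)"
    unfolding Vn_def I_def by (intro eq_matI) auto
  show ?thesis unfolding real_orthogonal_def eq
    using emb_orth[OF M I bij] by auto
qed

lemma foldr_orth:
  assumes "\<forall>k\<in>set ks. real_orthogonal N (G k)" "real_orthogonal N X"
  shows "real_orthogonal N (foldr (\<lambda>k M. G k * M) ks X)"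
  using assms by (induction ks) (auto intro: orth_mult)

lemma W_struct:
  fixes Mk :: "nat \<Rightarrow> real mat"
  assumes m: "1 \<le> m" "m \<le> n"
  shows "\<forall>r c. r < n+d-1 \<longrightarrow> c < n+d-1 \<longrightarrow> d \<le> c \<longrightarrow>
     (c < d+m-1 \<longrightarrow> foldr (\<lambda>k M. Vk n d k (Mk k) * M) [m..<n] (Vn n d X) $$ (r,c) = (if r = c then 1 else 0)) \<and>
     (c < r \<longrightarrow> foldr (\<lambda>k M. Vk n d k (Mk k) * M) [m..<n] (Vn n d X) $$ (r,c) = 0)"
  using m(2,1)
proof (induction m rule: inc_induct)
  case base
  then show ?case by (auto simp: Vn_def)
next
  case (step m)
  define W where "W = foldr (\<lambda>k M. Vk n d k (Mk k) * M) [Suc m..<n] (Vn n d X)"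
  define V where "V = Vk n d m (Mk m)"
  have IH: "\<And>r c. r < n+d-1 \<Longrightarrow> c < n+d-1 \<Longrightarrow> d \<le> c \<Longrightarrow>
     (c < d+Suc m-1 \<longrightarrow> W $$ (r,c) = (if r = c then 1 else 0)) \<and> (c < r \<longrightarrow> W $$ (r,c) = 0)"
    using step.IH step.prems unfolding W_def by auto
  have dW: "dim_row W = n+d-1" "dim_col W = n+d-1"
  proof -
    have "dim_row (foldr (\<lambda>k M. Vk n d k (Mk k) * M) ks (Vn n d X)) = n+d-1 \<and>
          dim_col (foldr (\<lambda>k M. Vk n d k (Mk k) * M) ks (Vn n d X)) = n+d-1" for ks
      by (induction ks) (auto simp: Vk_def Vn_def)
    then show "dim_row W = n+d-1" "dim_col W = n+d-1" unfolding W_def by auto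
  qed
  have eqf: "foldr (\<lambda>k M. Vk n d k (Mk k) * M) [m..<n] (Vn n d X) = V * W"
    using step.hyps unfolding V_def W_def by (simp add: upt_conv_Cons)
  have ent: "(V * W) $$ (r,c) = (\<Sum>l\<in>{0..<n+d-1}. V $$ (r,l) * W $$ (l,c))"
    if "r < n+d-1" "c < n+d-1" for r c
    using that dW by (simp add: V_def Vk_def scalar_prod_def)
  show ?case
  proof (intro allI impI conjI)
    fix r c assume r: "r < n+d-1" and c: "c < n+d-1" and dc: "d \<le> c"
    {
      assume cm: "c < d + m - 1"
      have "(V * W) $$ (r,c) = (\<Sum>l\<in>{0..<n+d-1}. if l = c then V $$ (r,c) else 0)"
        unfolding ent[OF r c] by (rule sum.cong, use IH[OF _ c dc] cm in auto)
      also have "\<dots> = V $$ (r,c)" using c by simp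
      also have "\<dots> = (if r = c then 1 else 0)" using r c dc cm step.prems unfolding V_def Vk_def by auto
      finally show "foldr (\<lambda>k M. Vk n d k (Mk k) * M) [m..<n] (Vn n d X) $$ (r,c) = (if r = c then 1 else 0)"
        using eqf by simp
    }
    {
      assume rc: "c < r"
      show "foldr (\<lambda>k M. Vk n d k (Mk k) * M) [m..<n] (Vn n d X) $$ (r,c) = 0"
      proof (cases "r = d + m - 1")
        case True
        have "(V * W) $$ (r,c) = (\<Sum>l\<in>{0..<n+d-1}. if l = c then V $$ (r,c) else 0)"
          unfolding ent[OF r c] by (rule sum.cong, use IH[OF _ c dc] rc True in auto)
        also have "\<dots> = V $$ (r,c)" using c by simp
        also have "\<dots> = 0" using r c dc rc True step.prems unfolding V_def Vk_def by auto
        finally show ?thesis using eqf by simp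
      next
        case False
        have "(V * W) $$ (r,c) = (\<Sum>l\<in>{0..<n+d-1}. if l = r then W $$ (r,c) else 0)"
          unfolding ent[OF r c] by (rule sum.cong, use r rc dc False in \<open>auto simp: V_def Vk_def\<close>)
        also have "\<dots> = W $$ (r,c)" using r by simp
        also have "\<dots> = 0" using IH[OF r c dc] rc by simp
        finally show ?thesis using eqf by simp
      qed
    }
  qed
qed

lemma Pent:
  assumes "2 \<le> n" "r < n" "i < n"
  shows "Pmat n \<gamma> $$ (r,i) = (if r = (if i = n-1 then 0 else i+1) then (if i = 0 then \<gamma> else 1) else 0)"
  using assms unfolding Pmat_def by auto


lemma sum_split_add: "(\<Sum>r\<in>{0..<a+b}. f r) = (\<Sum>r\<in>{0..<a}. f r) + (\<Sum>r\<in>{0..<b}. f (a + r))"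
  for f :: "nat \<Rightarrow> real"
  by (induction b) auto

theorem corollary7p3:
  fixes n d :: nat and Theta Phi :: "real vec set" and Vt Vd :: "real vec \<Rightarrow> real mat"
    and \<gamma> :: real and \<theta> :: "nat \<Rightarrow> real vec"
  assumes "n \<ge> 2" and "1 \<le> d" and "d \<le> n"
    and "ORP (d + 1) (d + 1) Theta Vt"
    and "ORP d d Phi Vd"
    and "\<bar>\<gamma>\<bar> \<le> 1"
    and "\<forall>k\<in>{1..<n}. \<theta> k \<in> Theta"
    and "\<theta> n \<in> Phi"
  defines "R \<equiv> Vprod n d Vt Vd \<theta> * (0\<^sub>m (d - 1) n @\<^sub>r Pmat n \<gamma>)"
  defines "Chat \<equiv> mat (d - 1) n (\<lambda>(i, j). R $$ (i, j))"
  defines "A \<equiv> mat n n (\<lambda>(i, j). R $$ (d - 1 + i, j))"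
  defines "C \<equiv> mat d n (\<lambda>(i, j). if i = 0 then (if j = 0 then sqrt (1 - \<gamma>\<^sup>2) else 0)
                                  else Chat $$ (i - 1, j))"
  shows "HOON A C"
proof -
  note n = assms(1) and d = assms(2,3)
  define N where "N = n + d - 1"
  define W where "W = Vprod n d Vt Vd \<theta>"
  define S where "S = 0\<^sub>m (d - 1) n @\<^sub>r Pmat n \<gamma>"
  define P where "P = Pmat n \<gamma>"
  have Wf: "W = foldr (\<lambda>k M. Vk n d k (Vt (\<theta> k)) * M) [1..<n] (Vn n d (Vd (\<theta> n)))"
    unfolding W_def Vprod_def ..
  have Worth: "real_orthogonal N W" unfolding Wf N_def
  proof (rule foldr_orth)
    show "\<forall>k\<in>set [1..<n]. real_orthogonal (n + d - 1) (Vk n d k (Vt (\<theta> k)))"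
    proof
      fix k assume k: "k \<in> set [1..<n]"
      have "real_orthogonal (d+1) (Vt (\<theta> k))" using assms(4,7) k unfolding ORP_def by auto
      then show "real_orthogonal (n + d - 1) (Vk n d k (Vt (\<theta> k)))" using k by (intro Vk_orth) auto
    qed
    have "real_orthogonal d (Vd (\<theta> n))" using assms(5,8) unfolding ORP_def by auto
    then show "real_orthogonal (n + d - 1) (Vn n d (Vd (\<theta> n)))" using n by (intro Vn_orth) auto
  qed
  have Wc: "W \<in> carrier_mat N N" and WW: "transpose_mat W * W = 1\<^sub>m N"
    using Worth unfolding real_orthogonal_def by auto
  have NN: "N = (d-1) + n" using d unfolding N_def by simp
  have Sc: "S \<in> carrier_mat N n" unfolding S_def NN
    by (intro carrier_append_rows) (auto simp: Pmat_def)
  have Rdef: "R = W * S" unfolding R_def W_def S_def ..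
  have Rc: "R \<in> carrier_mat N n" using Wc Sc Rdef by auto
  have Sent: "S $$ (l,j) = (if l < d-1 then 0 else P $$ (l-(d-1), j))" if "l < N" "j < n" for l j
    using that d unfolding S_def P_def append_rows_def N_def by (simp add: Pmat_def)
  have Pent': "P $$ (r,i) = (if r = (if i = n-1 then 0 else i+1) then (if i = 0 then \<gamma> else 1) else 0)"
    if "r < n" "i < n" for r i using Pent[OF n that] unfolding P_def .
  have Went: "R $$ (r,j) = (\<Sum>l\<in>{0..<N}. W $$ (r,l) * S $$ (l,j))" if "r < N" "j < n" for r j
    using that Wc Sc unfolding Rdef by (simp add: scalar_prod_def)
  have WS: "\<forall>r c. r < n+d-1 \<longrightarrow> c < n+d-1 \<longrightarrow> d \<le> c \<longrightarrow>
     (c < d+1-1 \<longrightarrow> W $$ (r,c) = (if r = c then 1 else 0)) \<and> (c < r \<longrightarrow> W $$ (r,c) = 0)"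
    unfolding Wf by (rule W_struct) (use n in auto)
  have hess: "A $$ (i, j) = 0" if ij: "i < n" "j < n" "i > j + 1" for i j
  proof -
    have r: "d - 1 + i < N" using ij d unfolding N_def by auto
    have "R $$ (d-1+i, j) = (\<Sum>l\<in>{0..<N}. if l = d + j then W $$ (d-1+i, d+j) * (if j = 0 then \<gamma> else 1) else 0)"
      unfolding Went[OF r ij(2)]
    proof (rule sum.cong)
      fix l assume l: "l \<in> {0..<N}"
      show "W $$ (d-1+i, l) * S $$ (l,j) = (if l = d + j then W $$ (d-1+i, d+j) * (if j = 0 then \<gamma> else 1) else 0)"
        using Sent[of l j] Pent'[of "l-(d-1)" j] l ij d unfolding N_def by auto
    qed simp
    also have "\<dots> = 0" using WS ij d unfolding N_def by auto
    finally show ?thesis unfolding A_def using ij by simp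
  qed
  have Wt: "transpose_mat W \<in> carrier_mat N N" and St: "transpose_mat S \<in> carrier_mat n N" using Wc Sc by auto
  have RR: "transpose_mat R * R = transpose_mat S * S"
  proof -
    have "transpose_mat R * R = (transpose_mat S * transpose_mat W) * (W * S)"
      unfolding Rdef by (simp add: transpose_mult[OF Wc Sc])
    also have "\<dots> = transpose_mat S * (transpose_mat W * (W * S))"
      by (rule assoc_mult_mat[OF St Wt], use Wc Sc in auto)
    also have "transpose_mat W * (W * S) = (transpose_mat W * W) * S"
      by (rule assoc_mult_mat[symmetric, OF Wt Wc Sc])
    also have "\<dots> = S" using WW Sc by simp
    finally show ?thesis .
  qed
  have gram: "(\<Sum>r\<in>{0..<N}. R $$ (r,i) * R $$ (r,j)) = (if i = j then (if i = 0 then \<gamma>\<^sup>2 else 1) else 0)"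
    if ij: "i < n" "j < n" for i j
  proof -
    have "(\<Sum>r\<in>{0..<N}. R $$ (r,i) * R $$ (r,j)) = (transpose_mat R * R) $$ (i,j)"
      using Rc ij by (simp add: scalar_prod_def)
    also have "\<dots> = (transpose_mat S * S) $$ (i,j)" by (simp add: RR)
    also have "\<dots> = (\<Sum>r\<in>{0..<N}. S $$ (r,i) * S $$ (r,j))"
      using Sc ij by (simp add: scalar_prod_def)
    also have "\<dots> = (\<Sum>r\<in>{0..<d-1}. S $$ (r,i) * S $$ (r,j)) + (\<Sum>r\<in>{0..<n}. S $$ (d-1+r,i) * S $$ (d-1+r,j))"
      unfolding NN by (rule sum_split_add)
    also have "(\<Sum>r\<in>{0..<d-1}. S $$ (r,i) * S $$ (r,j)) = 0"
      by (rule sum.neutral) (use Sent ij d in \<open>auto simp: N_def\<close>)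
    also have "(\<Sum>r\<in>{0..<n}. S $$ (d-1+r,i) * S $$ (d-1+r,j)) = (\<Sum>r\<in>{0..<n}. P $$ (r,i) * P $$ (r,j))"
      by (rule sum.cong) (use Sent ij d in \<open>auto simp: N_def\<close>)
    also have "\<dots> = (\<Sum>r\<in>{0..<n}. if r = (if i = n-1 then 0 else i+1) then
          (if i = 0 then \<gamma> else 1) * (if r = (if j = n-1 then 0 else j+1) then (if j = 0 then \<gamma> else 1) else 0) else 0)"
      by (rule sum.cong) (use Pent' ij in auto)
    also have "\<dots> = (if i = j then (if i = 0 then \<gamma>\<^sup>2 else 1) else 0)"
      using ij n by (auto simp: power2_eq_square split: if_splits)
    finally show ?thesis by simp
  qed
  have Ac: "A \<in> carrier_mat n n" unfolding A_def by simp
  have Cc: "C \<in> carrier_mat d n" unfolding C_def by simp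
  have g1: "1 - \<gamma>\<^sup>2 \<ge> 0" using assms(6) by (simp add: abs_square_le_1)
  have id: "transpose_mat A * A = 1\<^sub>m n - transpose_mat C * C"
  proof (rule eq_matI)
    fix i j assume "i < dim_row (1\<^sub>m n - transpose_mat C * C)" "j < dim_col (1\<^sub>m n - transpose_mat C * C)"
    hence ij: "i < n" "j < n" using Cc by auto
    have lhs: "(transpose_mat A * A) $$ (i,j) = (\<Sum>r\<in>{0..<n}. R $$ (d-1+r,i) * R $$ (d-1+r,j))"
      using ij by (simp add: A_def scalar_prod_def)
    have CC: "(transpose_mat C * C) $$ (i,j) = (\<Sum>r\<in>{0..<d}. C $$ (r,i) * C $$ (r,j))"
      using ij Cc by (simp add: scalar_prod_def)
    also have "\<dots> = (\<Sum>r\<in>{0..<1}. C $$ (r,i) * C $$ (r,j)) + (\<Sum>r\<in>{0..<d-1}. C $$ (1+r,i) * C $$ (1+r,j))"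
      using sum_split_add[where a=1 and b="d-1" and f="\<lambda>r. C $$ (r,i) * C $$ (r,j)"] d by simp
    also have "(\<Sum>r\<in>{0..<d-1}. C $$ (1+r,i) * C $$ (1+r,j)) = (\<Sum>r\<in>{0..<d-1}. R $$ (r,i) * R $$ (r,j))"
      by (rule sum.cong) (use ij d in \<open>auto simp: C_def Chat_def\<close>)
    also have "(\<Sum>r\<in>{0..<1}. C $$ (r,i) * C $$ (r,j)) = (if i = 0 \<and> j = 0 then 1 - \<gamma>\<^sup>2 else 0)"
      using ij d g1 by (auto simp: C_def)
    finally have CC': "(transpose_mat C * C) $$ (i,j) = (if i = 0 \<and> j = 0 then 1 - \<gamma>\<^sup>2 else 0) + (\<Sum>r\<in>{0..<d-1}. R $$ (r,i) * R $$ (r,j))" .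
    have "(\<Sum>r\<in>{0..<N}. R $$ (r,i) * R $$ (r,j)) = (\<Sum>r\<in>{0..<d-1}. R $$ (r,i) * R $$ (r,j)) + (\<Sum>r\<in>{0..<n}. R $$ (d-1+r,i) * R $$ (d-1+r,j))"
      unfolding NN by (rule sum_split_add)
    then show "(transpose_mat A * A) $$ (i,j) = (1\<^sub>m n - transpose_mat C * C) $$ (i,j)"
      using gram[OF ij] lhs CC' ij Cc by (auto simp: power2_eq_square)
  qed (use Ac Cc in auto)
  show ?thesis unfolding HOON_def Let_def
  proof (intro conjI)
    show "A \<in> carrier_mat (dim_col A) (dim_col A)" using Ac by auto
    show "dim_col C = dim_col A" using Ac Cc by auto
    show "\<forall>i<dim_col A. \<forall>j<dim_col A. j + 1 < i \<longrightarrow> A $$ (i, j) = 0" using hess Ac by auto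
    show "\<forall>j<dim_col A. 0 < j \<longrightarrow> C $$ (0, j) = 0" using Ac d unfolding C_def by auto
    show "transpose_mat A * A = 1\<^sub>m (dim_col A) - transpose_mat C * C" using id Ac by auto
  qed
qed

end
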